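(* Let $n \geq 1$ and let $D_n'$ be the digraph defined in the context. For any $u, v, w \in V(D_n')$, it is not the case that all of $uv$, $vw$, $uw$ are edges of $D_n'$. (That is, $D_n'$ contains no transitive tournament on three vertices.)
   Context: Digraphs $D_n$ are defined recursively. $D_1$ is a single vertex with no edges. For $n \geq 2$, take $n-1$ disjoint copies $D_{n-1}^1,\dots,D_{n-1}^{n-1}$ of $D_{n-1}$; let $\mathcal{T}$ be the set of all sequences $T=(x_1,\dots,x_{n-1})$ with $x_i \in V(D_{n-1}^i)$ for each $i$. For each $T \in \mathcal{T}$ add a new vertex $v_T$ and, for each $i \in \{1,\dots,n-1\}$, an edge from $x_i$ to $v_T$. The resulting digraph is $D_n$. It is a known fact that $D_n$ is acyclic and that for any two vertices $u,v$ of $D_n$ there is at most one directed path from $u$ to $v$ in $D_n$. The length of a path is its number of edges. The digraph $D_n'$ has $V(D_n')=V(D_n)$ and, for every ordered pair $(u,v)$ of vertices such that there is a directed path in $D_n$ from $u$ to $v$: if that path has length $\equiv 1 \pmod 3$, $D_n'$ has the edge $uv$, called positive; if that path has length $\equiv 2 \pmod 3$, $D_n'$ has the edge $vu$, called negative. $D_n'$ has no other edges. *)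

theory Defs
  imports Main
begin

text \<open>Base is the single vertex of D_1;
  Copy i x is the vertex x of the i-th copy of D_(n-1) inside D_n (1 <= i <= n-1);
  New xs is the new vertex v_T for T = (xs!0, ..., xs!(n-2)), where xs!(i-1) is
  a vertex of D_(n-1) taken in copy i.\<close>
datatype vtx = Base | Copy nat vtx | New "vtx list"

fun Dv :: "nat \<Rightarrow> vtx set" where
  "Dv 0 = {}"
| "Dv (Suc 0) = {Base}"
| "Dv (Suc (Suc m)) =
     {Copy i x | i x. i \<in> {1..Suc m} \<and> x \<in> Dv (Suc m)}
     \<union> {New xs | xs. length xs = Suc m \<and> (\<forall>i<Suc m. xs ! i \<in> Dv (Suc m))}"

fun De :: "nat \<Rightarrow> (vtx \<times> vtx) set" where
  "De 0 = {}"
| "De (Suc 0) = {}"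
| "De (Suc (Suc m)) =
     {(Copy i x, Copy i y) | i x y. i \<in> {1..Suc m} \<and> (x, y) \<in> De (Suc m)}
     \<union> {(Copy (Suc i) (xs ! i), New xs) | i xs.
          length xs = Suc m \<and> (\<forall>j<Suc m. xs ! j \<in> Dv (Suc m)) \<and> i < Suc m}"

definition dpath :: "nat \<Rightarrow> vtx \<Rightarrow> vtx \<Rightarrow> nat \<Rightarrow> bool" where
  "dpath n u v k \<longleftrightarrow> (\<exists>ps. length ps = Suc k \<and> distinct ps \<and> set ps \<subseteq> Dv n
      \<and> ps ! 0 = u \<and> ps ! k = v \<and> (\<forall>j<k. (ps ! j, ps ! Suc j) \<in> De n))"

definition De' :: "nat \<Rightarrow> (vtx \<times> vtx) set" where
  "De' n = {(u, v) | u v. u \<in> Dv n \<and> v \<in> Dv n \<and>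
      ((\<exists>k. dpath n u v k \<and> k mod 3 = 1) \<or> (\<exists>k. dpath n v u k \<and> k mod 3 = 2))}"

end

theory Submission
  imports Defs
begin

inductive walk :: "nat \<Rightarrow> vtx \<Rightarrow> vtx \<Rightarrow> nat \<Rightarrow> bool" for n where
  w0: "walk n u u 0"
| wS: "(u, w) \<in> De n \<Longrightarrow> walk n w v k \<Longrightarrow> walk n u v (Suc k)"

lemma walk_trans: "walk n a b x \<Longrightarrow> walk n b c y \<Longrightarrow> walk n a c (x + y)"
  by (induction rule: walk.induct) (auto intro: walk.intros)

lemma dpath_walk:
  assumes "dpath n u v k" shows "walk n u v k"
proof -
  obtain ps where ps: "length ps = Suc k" "ps ! 0 = u" "ps ! k = v"
    "\<forall>j<k. (ps ! j, ps ! Suc j) \<in> De n"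
    using assms unfolding dpath_def by blast
  have "\<forall>j\<le>k. walk n (ps ! (k - j)) v j"
  proof (intro allI impI)
    fix j assume "j \<le> k"
    then show "walk n (ps ! (k - j)) v j"
    proof (induction j)
      case 0 then show ?case using ps by (simp add: walk.w0)
    next
      case (Suc j)
      have e: "(ps ! (k - Suc j), ps ! Suc (k - Suc j)) \<in> De n" using ps Suc by auto
      have "Suc (k - Suc j) = k - j" using Suc by arith
      with e Suc show ?case by (auto intro: walk.wS)
    qed
  qed
  then show ?thesis using ps by (metis diff_zero le_refl diff_self_eq_0)
qed

lemma walk_SS:
  "walk (Suc (Suc m)) u v k \<Longrightarrow>
    (\<forall>xs. u = New xs \<longrightarrow> k = 0 \<and> v = u) \<and>
    (\<forall>i x. u = Copy i x \<longrightarrow>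
       (\<exists>y. v = Copy i y \<and> walk (Suc m) x y k) \<or>
       (\<exists>xs j k0. v = New xs \<and> k = Suc k0 \<and> i = Suc j \<and> walk (Suc m) x (xs ! j) k0))"
proof (induction rule: walk.induct)
  case (w0 u)
  then show ?case by (auto intro: walk.w0)
next
  case (wS u w v k)
  from wS.hyps(1) show ?case
  proof (simp only: De.simps, elim UnE)
    assume "(u, w) \<in> {(Copy i x, Copy i y) | i x y. i \<in> {1..Suc m} \<and> (x, y) \<in> De (Suc m)}"
    then obtain i x y where h: "u = Copy i x" "w = Copy i y" "(x, y) \<in> De (Suc m)" by blast
    from wS.IH h(2) have
      "(\<exists>z. v = Copy i z \<and> walk (Suc m) y z k) \<or>
       (\<exists>xs j k0. v = New xs \<and> k = Suc k0 \<and> i = Suc j \<and> walk (Suc m) y (xs ! j) k0)" by blast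
    then show ?thesis using h by (auto intro: walk.wS)
  next
    assume "(u, w) \<in> {(Copy (Suc i) (xs ! i), New xs) | i xs.
          length xs = Suc m \<and> (\<forall>j<Suc m. xs ! j \<in> Dv (Suc m)) \<and> i < Suc m}"
    then obtain i xs where h: "u = Copy (Suc i) (xs ! i)" "w = New xs" by blast
    from wS.IH h(2) have "k = 0" "v = New xs" by auto
    then show ?thesis using h by (auto intro: walk.w0)
  qed
qed

lemma walk_New0: "walk n (New xs) v k \<Longrightarrow> k = 0 \<and> v = New xs"
proof (induction n rule: De.induct)
  case 1 then show ?case by (cases rule: walk.cases) auto
next
  case 2 then show ?case by (cases rule: walk.cases) auto
next
  case (3 m) then show ?case using walk_SS by blast
qed

lemma walk_empty: "walk n u v k \<Longrightarrow> De n = {} \<Longrightarrow> k = 0"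
  by (induction rule: walk.induct) auto

lemma walk_unique: "walk n u v k \<Longrightarrow> walk n u v k' \<Longrightarrow> k = k'"
proof (induction n arbitrary: u v k k' rule: De.induct)
  case 1 then show ?case by (metis De.simps(1) walk_empty)
next
  case 2 then show ?case by (metis De.simps(2) walk_empty)
next
  case (3 m)
  show ?case
  proof (cases u)
    case Base
    from "3.prems"(1) Base have "k = 0" by (cases rule: walk.cases) auto
    moreover from "3.prems"(2) Base have "k' = 0" by (cases rule: walk.cases) auto
    ultimately show ?thesis by simp
  next
    case (New xs)
    then show ?thesis using walk_SS[OF "3.prems"(1)] walk_SS[OF "3.prems"(2)] by auto
  next
    case (Copy i x)
    note a = walk_SS[OF "3.prems"(1)] walk_SS[OF "3.prems"(2)]
    show ?thesis
    proof (cases v)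
      case (Copy i' y)
      then show ?thesis using a \<open>u = Copy i x\<close> "3.IH" by auto
    next
      case (New xs)
      then show ?thesis using a \<open>u = Copy i x\<close> "3.IH" by auto
    next
      case Base
      then show ?thesis using a \<open>u = Copy i x\<close> by auto
    qed
  qed
qed

lemma De'_walk: "(u, v) \<in> De' n \<Longrightarrow>
   (\<exists>k. walk n u v k \<and> k mod 3 = 1) \<or> (\<exists>k. walk n v u k \<and> k mod 3 = 2)"
  unfolding De'_def using dpath_walk by blast

theorem lemma2p3:
  fixes n :: nat and u v w :: vtx
  assumes "n \<ge> 1" and "u \<in> Dv n" and "v \<in> Dv n" and "w \<in> Dv n"
  shows "\<not> ((u, v) \<in> De' n \<and> (v, w) \<in> De' n \<and> (u, w) \<in> De' n)"
proof
  assume h: "(u, v) \<in> De' n \<and> (v, w) \<in> De' n \<and> (u, w) \<in> De' n"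
  have cyc: "\<And>a k. walk n a a k \<Longrightarrow> k = 0"
    using walk_unique walk.w0 by metis
  note U = walk_unique[of n] and T = walk_trans[of n]
  from h have e1: "(\<exists>k. walk n u v k \<and> k mod 3 = 1) \<or> (\<exists>k. walk n v u k \<and> k mod 3 = 2)"
    and e2: "(\<exists>k. walk n v w k \<and> k mod 3 = 1) \<or> (\<exists>k. walk n w v k \<and> k mod 3 = 2)"
    and e3: "(\<exists>k. walk n u w k \<and> k mod 3 = 1) \<or> (\<exists>k. walk n w u k \<and> k mod 3 = 2)"
    using De'_walk by blast+
  from e1 e2 e3 show False
  proof (elim disjE exE)
    fix a b c assume 1: "walk n u v a \<and> a mod 3 = 1" and 2: "walk n v w b \<and> b mod 3 = 1"
      and 3: "walk n u w c \<and> c mod 3 = 1"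
    then have "c = a + b" using U T by blast
    then show False by (insert 1 2 3, elim conjE, presburger)
  next
    fix a b c assume 1: "walk n u v a \<and> a mod 3 = 1" and 2: "walk n v w b \<and> b mod 3 = 1"
      and 3: "walk n w u c \<and> c mod 3 = 2"
    then have "a + b + c = 0" using cyc T by blast
    then show False by (insert 1, elim conjE, presburger)
  next
    fix a b c assume 1: "walk n u v a \<and> a mod 3 = 1" and 2: "walk n w v b \<and> b mod 3 = 2"
      and 3: "walk n u w c \<and> c mod 3 = 1"
    then have "a = c + b" using U T by blast
    then show False by (insert 1 2 3, elim conjE, presburger)
  next
    fix a b c assume 1: "walk n u v a \<and> a mod 3 = 1" and 2: "walk n w v b \<and> b mod 3 = 2"
      and 3: "walk n w u c \<and> c mod 3 = 2"
    then have "b = c + a" using U T by blast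
    then show False by (insert 1 2 3, elim conjE, presburger)
  next
    fix a b c assume 1: "walk n v u a \<and> a mod 3 = 2" and 2: "walk n v w b \<and> b mod 3 = 1"
      and 3: "walk n u w c \<and> c mod 3 = 1"
    then have "b = a + c" using U T by blast
    then show False by (insert 1 2 3, elim conjE, presburger)
  next
    fix a b c assume 1: "walk n v u a \<and> a mod 3 = 2" and 2: "walk n v w b \<and> b mod 3 = 1"
      and 3: "walk n w u c \<and> c mod 3 = 2"
    then have "a = b + c" using U T by blast
    then show False by (insert 1 2 3, elim conjE, presburger)
  next
    fix a b c assume 1: "walk n v u a \<and> a mod 3 = 2" and 2: "walk n w v b \<and> b mod 3 = 2"
      and 3: "walk n u w c \<and> c mod 3 = 1"
    then have "a + c + b = 0" using cyc T by blast
    then show False by (insert 1, elim conjE, presburger)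
  next
    fix a b c assume 1: "walk n v u a \<and> a mod 3 = 2" and 2: "walk n w v b \<and> b mod 3 = 2"
      and 3: "walk n w u c \<and> c mod 3 = 2"
    then have "c = b + a" using U T by blast
    then show False by (insert 1 2 3, elim conjE, presburger)
  qed
qed

end
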